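(* Let $\rho_0=\sqrt{1+e^{W_0(2/e^2)+2}}$ and let $b\mapsto\rho_b$ ($b\ge0$) be the solution of the ordinary differential equation $\frac{d}{db}\rho_b=\frac{\rho_b}{2\rho_b+b}\left(1-\frac{2}{\rho_b^2+1}\right)$ with initial value $\rho_0$ at $b=0$. Then for every $b>0$, $$\max\left(\rho_0,\ \frac45\cdot\frac{b}{2W_0\!\left(\frac{b}{2\rho_0}\right)}\right)\le\rho_b\le\frac{b}{2W_0\!\left(\frac{b}{2\rho_0}\right)}.$$
   Context: $W_0$ is the principal branch of the Lambert W function: for $z>-1/e$, $W_0(z)$ is the unique $w>-1$ with $we^w=z$. *)

theory Defs
  imports Complex_Main
begin

definition lambertW0 :: "real \<Rightarrow> real" where
  "lambertW0 z = (THE w. w > -1 \<and> w * exp w = z)"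

definition rho0 :: real where
  "rho0 = sqrt (1 + exp (lambertW0 (2 / exp 2) + 2))"

end

theory Submission
  imports Defs "HOL-Analysis.Analysis"
begin

lemma xexp_strict_mono:
  fixes a b :: real assumes "0 \<le> a" "a < b" shows "a * exp a < b * exp b"
  using assms by (intro mult_strict_mono) auto

lemma lambertW0_pos:
  fixes z :: real assumes z: "z > 0"
  shows "lambertW0 z > 0 \<and> lambertW0 z * exp (lambertW0 z) = z"
proof -
  have "\<exists>x. 0 \<le> x \<and> x \<le> z \<and> x * exp x = z"
  proof (rule IVT)
    show "0 * exp 0 \<le> z" using z by simp
    show "z \<le> z * exp z" using z by simp
  qed (use z in \<open>auto intro!: continuous_intros\<close>)
  then obtain x where x: "x * exp x = z" by blast
  have xpos: "x > 0" using x z by (metis exp_gt_zero zero_less_mult_pos2)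
  have uniq: "y = x" if "y > -1" "y * exp y = z" for y
  proof -
    have "y > 0" using that z by (metis exp_gt_zero zero_less_mult_pos2)
    show ?thesis using xexp_strict_mono[of y x] xexp_strict_mono[of x y] \<open>y>0\<close> xpos that x
      by (cases "y < x"; cases "x < y") auto
  qed
  have "lambertW0 z = x"
    unfolding lambertW0_def
    by (rule the_equality) (use xpos x uniq in auto)
  then show ?thesis using xpos x by simp
qed

lemma gen_id: fixes a b d e q :: real shows "a / b * q * d / e = (a / e) * (d / b * q)"
  by (cases "b=0"; cases "e=0") (simp_all add: field_simps)

lemma gen2: fixes Z :: real shows "1/2 * (Z - 1) = Z / 2 - 1/2" by simp

lemma gen3: fixes a b E B Z :: real
  shows "a + b * B = 1/2 * Z \<Longrightarrow> a * E + b * (E * B) = E / 2 * Z"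
proof -
  assume h: "a + b * B = 1/2 * Z"
  have "a * E + b * (E * B) = E * (a + b * B)" by (simp add: algebra_simps)
  also have "\<dots> = E / 2 * Z" using h by simp
  finally show ?thesis .
qed

lemma psi_deriv:
  fixes rho :: "real \<Rightarrow> real"
  assumes d: "(rho has_real_derivative (rho s / (2 * rho s + s) * (1 - 2 / ((rho s)\<^sup>2 + 1)))) (at s within S)"
    and pos: "rho s > 0" "s \<ge> 0" and c: "c > 0"
  shows "((\<lambda>t. c * rho t * exp (- t / (2 * c * rho t))) has_real_derivative
     (exp (- s / (2 * c * rho s)) / 2 * ((2*c*rho s + s) / (2 * rho s + s) * (1 - 2 / ((rho s)\<^sup>2 + 1)) - 1))) (at s within S)"
proof -
  define r where "r = rho s"
  define q where "q = 1 - 2 / (r\<^sup>2 + 1)"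
  define r' where "r' = r / (2 * r + s) * q"
  have rp: "r > 0" using pos r_def by simp
  have d': "(rho has_real_derivative r') (at s within S)" using d unfolding r'_def q_def r_def .
  have DD: "((\<lambda>t. c * rho t * exp (- t / (2 * c * rho t))) has_real_derivative
     (c * r' * exp (- s / (2 * c * r)) + c * r * (exp (- s / (2 * c * r)) * (- ((1 * (2 * c * r) - s * (2 * c * r')) / (2 * c * r)^2))))) (at s within S)"
    using c rp unfolding r_def
    by (auto intro!: derivative_eq_intros d'[unfolded r_def] simp: power2_eq_square)
  moreover have EQ: "c * r' * exp (- s / (2 * c * r)) + c * r * (exp (- s / (2 * c * r)) * (- ((1 * (2 * c * r) - s * (2 * c * r')) / (2 * c * r)^2)))
     = exp (- s / (2 * c * r)) / 2 * ((2*c*r + s) / (2 * r + s) * q - 1)"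
  proof -
    have h: "2 * r + s > 0" using rp pos by simp
    have "c * r' + c * r * (- ((1 * (2 * c * r) - s * (2 * c * r')) / (2 * c * r)^2))
       = 1 / 2 * ((2*c*r + s) / (2 * r + s) * q - 1)"
    proof -
      have "c * r * (- ((1 * (2 * c * r) - s * (2 * c * r')) / (2 * c * r)^2)) = - 1/2 + s * r' / (2 * r)"
        using c rp by (simp add: field_simps power2_eq_square)
      moreover have "c * r' + s * r' / (2 * r) = (2*c*r + s) / (2 * r + s) * q / 2"
      proof -
        have "c * r' + s * r' / (2 * r) = r' * (2*c*r + s) / (2 * r)" using rp by (simp add: field_simps)
        also have "\<dots> = (2*c*r + s) / (2 * r + s) * q / 2" unfolding r'_def
        proof -
          have "r / (2 * r + s) * q * (2 * c * r + s) / (2 * r) = (r / (2*r)) * ((2 * c * r + s) / (2 * r + s) * q)"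
            by (rule gen_id)
          also have "r / (2*r) = 1/2" using rp by simp
          finally show "r / (2 * r + s) * q * (2 * c * r + s) / (2 * r) = (2 * c * r + s) / (2 * r + s) * q / 2" by simp
        qed
        finally show ?thesis .
      qed
      moreover have "1 / 2 * ((2*c*r + s) / (2 * r + s) * q - 1) = (2*c*r + s) / (2 * r + s) * q / 2 - 1/2"
        by (rule gen2)
      ultimately show ?thesis by linarith
    qed
    then show ?thesis by (rule gen3)
  qed
  show ?thesis using DD unfolding EQ unfolding r_def q_def .
qed

lemma at_from_within:
  fixes g :: "real \<Rightarrow> real"
  assumes "(g has_real_derivative D) (at x within {0..})" "x > 0"
  shows "(g has_real_derivative D) (at x)"
proof -
  have "(g has_real_derivative D) (at x within {0<..})"
    using assms(1) by (rule DERIV_subset) auto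
  moreover have "at x within {0<..} = at x" using assms(2) by (intro at_within_open) auto
  ultimately show ?thesis by simp
qed

lemma cont_from_deriv:
  fixes g :: "real \<Rightarrow> real"
  assumes "\<And>x. x \<ge> 0 \<Longrightarrow> (g has_real_derivative g' x) (at x within {0..})"
  shows "continuous_on {0..} g"
  unfolding continuous_on_eq_continuous_within
  using assms DERIV_continuous by (metis atLeast_iff)

lemma incr_helper:
  fixes g :: "real \<Rightarrow> real"
  assumes "0 \<le> a" "a \<le> c"
    and d: "\<And>x. x \<ge> 0 \<Longrightarrow> (g has_real_derivative g' x) (at x within {0..})"
    and p: "\<And>x. a < x \<Longrightarrow> x < c \<Longrightarrow> g' x \<ge> 0"
  shows "g a \<le> g c"
proof (rule DERIV_nonneg_imp_increasing_open[OF assms(2)])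
  fix x assume "a < x" "x < c"
  then show "\<exists>y. (g has_real_derivative y) (at x) \<and> 0 \<le> y"
    using at_from_within[OF d, of x] p[of x] assms(1) by auto
next
  show "continuous_on {a..c} g"
    using cont_from_deriv[of g g'] d assms(1)
    by (meson atLeastAtMost_iff atLeast_iff continuous_on_subset order_trans subsetI)
qed

lemma decr_helper:
  fixes g :: "real \<Rightarrow> real"
  assumes "0 \<le> a" "a \<le> c"
    and d: "\<And>x. x \<ge> 0 \<Longrightarrow> (g has_real_derivative g' x) (at x within {0..})"
    and p: "\<And>x. a < x \<Longrightarrow> x < c \<Longrightarrow> g' x \<le> 0"
  shows "g c \<le> g a"
proof -
  have "(\<lambda>x. - g x) a \<le> (\<lambda>x. - g x) c"
    by (rule incr_helper[OF assms(1,2), of _ "\<lambda>x. - g' x"])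
       (auto intro!: derivative_eq_intros d p)
  then show ?thesis by simp
qed

lemma lin_aux: fixes v xx yy :: real
  shows "9 * (1 + 2 * v + 2 * yy) \<le> xx \<Longrightarrow> v / 2 \<le> yy \<Longrightarrow> 1/2 \<le> v \<Longrightarrow> 10 * (1 + v) < 16/25 * xx + 1"
  unfolding distrib_left by linarith

lemma psi_mono:
  fixes x y b :: real assumes "0 < x" "x < y" "b > 0"
  shows "x * exp (- b / (2 * x)) < y * exp (- b / (2 * y))"
proof -
  have "b / (2 * y) < b / (2 * x)" using assms by (intro divide_strict_left_mono) auto
  then have "exp (- b / (2 * x)) < exp (- b / (2 * y))" by simp
  then show ?thesis using assms by (intro mult_strict_mono) auto
qed

lemma rho0_facts: "rho0 > 1 \<and> rho0\<^sup>2 > 9"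
proof -
  define W where "W = lambertW0 (2 / exp 2)"
  have W: "W > 0" "W * exp W = 2 / exp 2" using lambertW0_pos[of "2 / exp 2"] unfolding W_def by auto
  have eW: "exp (W + 2) = 2 / W"
  proof -
    have "exp W = 2 / (exp 2 * W)" using W by (simp add: field_simps)
    then show ?thesis by (simp add: exp_add field_simps)
  qed
  have W4: "W < 1/4"
  proof (rule ccontr)
    assume "\<not> W < 1/4"
    then have "(1/4) * exp (1/4) \<le> W * exp W" by (intro mult_mono) auto
    then have "exp (1/4) * exp 2 \<le> (8::real)" using W by (simp add: field_simps)
    then have a: "exp (9/4::real) \<le> 8" by (simp add: exp_add[symmetric])
    have e1: "exp (9/4::real) = exp (3/4) ^ 3" by (simp add: exp_of_nat_mult[symmetric])
    have "(65/32::real) \<le> exp (3/4)" using exp_lower_Taylor_quadratic[of "3/4::real"] by (simp add: power2_eq_square)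
    then have "(65/32::real)^3 \<le> exp (3/4) ^ 3" by (intro power_mono) auto
    then have "274625/32768 \<le> exp (3/4::real) ^ 3" by (simp add: power_divide)
    then show False using a e1 by linarith
  qed
  have "rho0\<^sup>2 = 1 + 2 / W" unfolding rho0_def W_def[symmetric] using eW W(1)
    by simp
  moreover have "2 / W > 8" using W W4 by (simp add: field_simps)
  ultimately have "rho0\<^sup>2 > 9" by simp
  moreover have "rho0 > 1" unfolding rho0_def by simp
  ultimately show ?thesis by simp
qed

theorem corollaryG1:
  fixes rho :: "real \<Rightarrow> real"
  assumes init: "rho 0 = rho0"
    and ode: "\<And>b. b \<ge> 0 \<Longrightarrow>
      (rho has_real_derivative
         (rho b / (2 * rho b + b) * (1 - 2 / ((rho b)\<^sup>2 + 1)))) (at b within {0..})"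
    and bpos: "b > 0"
  shows "max rho0 (4/5 * (b / (2 * lambertW0 (b / (2 * rho0))))) \<le> rho b
         \<and> rho b \<le> b / (2 * lambertW0 (b / (2 * rho0)))"
proof -
  define D where "D s = rho s / (2 * rho s + s) * (1 - 2 / ((rho s)\<^sup>2 + 1))" for s
  have odeD: "(rho has_real_derivative D x) (at x within {0..})" if "x \<ge> 0" for x
    using ode[OF that] unfolding D_def .
  have r0: "rho0 > 1" "rho0\<^sup>2 > 9" using rho0_facts by auto
  have cont: "continuous_on {0..} rho" using cont_from_deriv[of rho, OF odeD] .
  have Dpos: "D s > 0" if "rho s > 1" "s \<ge> 0" for s
  proof -
    have "(rho s)\<^sup>2 > 1" using that by (simp add: one_less_power)
    then have "2 / ((rho s)\<^sup>2 + 1) < 1" by simp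
    moreover have "rho s / (2 * rho s + s) > 0" using that by simp
    ultimately show ?thesis unfolding D_def by (intro mult_pos_pos) auto
  qed
  have gt1: "rho t > 1" if "t \<ge> 0" for t
  proof (rule ccontr)
    assume nt: "\<not> rho t > 1"
    define K where "K = {s \<in> {0..t}. rho s \<le> 1}"
    have Kcl: "closed K" unfolding K_def
      by (rule continuous_on_closed_Collect_le) (auto intro: continuous_on_subset[OF cont])
    have tK: "t \<in> K" using nt that unfolding K_def by auto
    have bb: "bdd_below K" unfolding K_def by (rule bdd_belowI[of _ 0]) auto
    define t0 where "t0 = Inf K"
    have t0K: "t0 \<in> K" unfolding t0_def using closed_contains_Inf[OF _ bb Kcl] tK by auto
    have t0t: "t0 \<le> t" unfolding t0_def using cInf_lower[OF tK bb] .
    have below: "rho s > 1" if "0 \<le> s" "s < t0" for s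
    proof (rule ccontr)
      assume "\<not> rho s > 1"
      then have "s \<in> K" using that t0t unfolding K_def by auto
      then have "t0 \<le> s" unfolding t0_def using cInf_lower[OF _ bb] by auto
      then show False using that by simp
    qed
    have t00: "0 \<le> t0" using t0K unfolding K_def by auto
    have "rho 0 \<le> rho t0"
      by (rule incr_helper[OF order_refl t00 odeD]) (auto intro!: less_imp_le[OF Dpos] below)
    then show False using t0K init r0 unfolding K_def by auto
  qed
  have ge0: "rho0 \<le> rho s" if "s \<ge> 0" for s
    using incr_helper[OF order_refl that odeD] Dpos gt1 init by (metis less_imp_le order_less_trans)
  have rpos: "rho s > 0" if "s \<ge> 0" for s using gt1[OF that] by simp
  define w where "w = lambertW0 (b / (2 * rho0))"
  have w: "w > 0" "w * exp w = b / (2 * rho0)"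
    using lambertW0_pos[of "b / (2 * rho0)"] bpos r0 unfolding w_def by auto
  define u where "u = b / (2 * w)"
  have u_eq: "u = rho0 * exp w" unfolding u_def using w r0 by (simp add: field_simps)
  have upos: "u > 0" using u_eq r0 by simp
  have Psi_u: "u * exp (- b / (2 * u)) = rho0"
  proof -
    have "b / (2 * u) = w" unfolding u_def using w bpos by (simp add: field_simps)
    then show ?thesis using u_eq by (simp add: exp_minus field_simps)
  qed

  define q where "q s = 1 - 2 / ((rho s)\<^sup>2 + 1)" for s
  have q_le: "q s \<le> 1" for s unfolding q_def by simp
  define P1 where "P1 t = 1 * rho t * exp (- t / (2 * 1 * rho t))" for t
  define P1' where "P1' s = exp (- s / (2 * 1 * rho s)) / 2 * ((2*1*rho s + s) / (2 * rho s + s) * (1 - 2 / ((rho s)\<^sup>2 + 1)) - 1)" for s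
  have dP1: "(P1 has_real_derivative P1' x) (at x within {0..})" if "x \<ge> 0" for x
    unfolding P1_def P1'_def by (rule psi_deriv[OF ode[OF that] rpos[OF that] that]) simp
  have P1'_eq: "P1' s = - (exp (- s / (2 * rho s)) / ((rho s)\<^sup>2 + 1))" if "s \<ge> 0" for s
  proof -
    have "2 * rho s + s > 0" using rpos[OF that] that by simp
    then have "(2*1*rho s + s) / (2 * rho s + s) = 1" by simp
    then show ?thesis unfolding P1'_def by simp
  qed
  have P1'_nonpos: "P1' s \<le> 0" if "s \<ge> 0" for s
    unfolding P1'_eq[OF that] by simp
  have P1_0: "P1 0 = rho0" unfolding P1_def using init by simp
  have P1b: "P1 b \<le> rho0"
    using decr_helper[OF order_refl less_imp_le[OF bpos] dP1] P1'_nonpos P1_0 by force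
  have upper: "rho b \<le> u"
  proof (rule ccontr)
    assume "\<not> rho b \<le> u"
    then have "u * exp (- b / (2 * u)) < rho b * exp (- b / (2 * rho b))"
      using psi_mono[of u "rho b" b] upos bpos by simp
    then show False using Psi_u P1b unfolding P1_def by simp
  qed

  define G where "G t = P1 t + t / (rho0\<^sup>2 + 1)" for t
  have r0p: "rho0\<^sup>2 + 1 > 0" using r0 by simp
  have dG: "(G has_real_derivative (P1' x + 1 / (rho0\<^sup>2 + 1))) (at x within {0..})" if "x \<ge> 0" for x
    unfolding G_def using r0p by (auto intro!: derivative_eq_intros dP1[OF that] simp: add_pos_nonneg)
  have G'nn: "P1' x + 1 / (rho0\<^sup>2 + 1) \<ge> 0" if "x \<ge> 0" for x
  proof -
    have e1: "exp (- x / (2 * rho x)) \<le> 1" using rpos[OF that] that by simp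
    have "rho0\<^sup>2 \<le> (rho x)\<^sup>2" using ge0[OF that] r0 by (intro power_mono) auto
    then have i: "1 / ((rho x)\<^sup>2 + 1) \<le> 1 / (rho0\<^sup>2 + 1)"
      using r0 by (intro divide_left_mono) (auto intro!: mult_pos_pos add_pos_nonneg)
    have "exp (- x / (2 * rho x)) / ((rho x)\<^sup>2 + 1) \<le> 1 / ((rho x)\<^sup>2 + 1)"
      using e1 by (intro divide_right_mono) (auto simp: add_nonneg_nonneg)
    then show ?thesis unfolding P1'_eq[OF that] using i by linarith
  qed
  have crude: "P1 s \<ge> rho0 - s / (rho0\<^sup>2 + 1)" if "s \<ge> 0" for s
  proof -
    have "G 0 \<le> G s" using incr_helper[OF order_refl that dG] G'nn by force
    then show ?thesis unfolding G_def using P1_0 by simp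
  qed
  define S where "S = rho0 * (rho0\<^sup>2 + 1) / 5"
  have Spos: "S > 0" unfolding S_def using r0 by (simp add: add_pos_nonneg)
  define P2 where "P2 t = 5/4 * rho t * exp (- t / (2 * (5/4) * rho t))" for t
  define P2' where "P2' s = exp (- s / (2 * (5/4) * rho s)) / 2 * ((2*(5/4)*rho s + s) / (2 * rho s + s) * (1 - 2 / ((rho s)\<^sup>2 + 1)) - 1)" for s
  have dP2: "(P2 has_real_derivative P2' x) (at x within {0..})" if "x \<ge> 0" for x
    unfolding P2_def P2'_def by (rule psi_deriv[OF ode[OF that] rpos[OF that] that]) simp
  have P2_early: "P2 s > rho0" if "0 \<le> s" "s < S" for s
  proof -
    have rp: "rho s > 0" using rpos that by simp
    have "s / (2 * (5/4) * rho s) \<le> s / (2 * rho s)" using rp that by (intro divide_left_mono) auto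
    then have "exp (- s / (2 * rho s)) \<le> exp (- s / (2 * (5/4) * rho s))" by simp
    then have "5/4 * P1 s \<le> P2 s" unfolding P1_def P2_def using rp by simp
    moreover have "s / (rho0\<^sup>2 + 1) < rho0 / 5" using that unfolding S_def
      by (simp add: field_simps add_pos_nonneg)
    ultimately show ?thesis using crude[OF that(1)] by linarith
  qed

  have contP2: "continuous_on {0..} P2" using cont_from_deriv[of P2, OF dP2] .
  have lower: "4/5 * u \<le> rho b"
  proof (rule ccontr)
    assume "\<not> 4/5 * u \<le> rho b"
    then have lt: "5/4 * rho b < u" by simp
    have "5/4 * rho b * exp (- b / (2 * (5/4 * rho b))) < u * exp (- b / (2 * u))"
      using psi_mono[OF _ lt bpos] rpos[of b] bpos by simp
    then have P2b: "P2 b < rho0" unfolding P2_def using Psi_u by (simp add: mult.assoc)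
    define K where "K = {s \<in> {0..b}. P2 s \<le> rho0}"
    have Kcl: "closed K" unfolding K_def
      by (rule continuous_on_closed_Collect_le) (auto intro: continuous_on_subset[OF contP2])
    have tK: "b \<in> K" using P2b bpos unfolding K_def by auto
    have bb: "bdd_below K" unfolding K_def by (rule bdd_belowI[of _ 0]) auto
    define t0 where "t0 = Inf K"
    have t0K: "t0 \<in> K" unfolding t0_def using closed_contains_Inf[OF _ bb Kcl] tK by auto
    have t0t: "t0 \<le> b" unfolding t0_def using cInf_lower[OF tK bb] .
    have above: "P2 s > rho0" if "0 \<le> s" "s < t0" for s
    proof (rule ccontr)
      assume "\<not> P2 s > rho0"
      then have "s \<in> K" using that t0t unfolding K_def by auto
      then have "t0 \<le> s" unfolding t0_def using cInf_lower[OF _ bb] by auto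
      then show False using that by simp
    qed
    have t0S: "S \<le> t0"
    proof (rule ccontr)
      assume "\<not> S \<le> t0"
      then have "P2 t0 > rho0" using P2_early[of t0] t0K unfolding K_def by auto
      then show False using t0K unfolding K_def by auto
    qed
    have t0p: "t0 > 0" using t0S Spos by simp
    have P2t0_ge: "rho0 \<le> P2 t0"
    proof -
      define C where "C = {s \<in> {0..t0}. rho0 \<le> P2 s}"
      have Ccl: "closed C" unfolding C_def
        by (rule continuous_on_closed_Collect_le) (auto intro: continuous_on_subset[OF contP2])
      have "{0..<t0} \<subseteq> C" unfolding C_def using above by (auto intro: less_imp_le)
      then have "closure {0..<t0} \<subseteq> C" using Ccl by (rule closure_minimal)
      then have "t0 \<in> C" using t0p by auto
      then show ?thesis unfolding C_def by simp
    qed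
    have P2t0: "P2 t0 = rho0" using P2t0_ge t0K unfolding K_def by auto
    define r where "r = rho t0"
    have rp: "r > 0" unfolding r_def using rpos t0p by simp
    have rr0: "rho0 \<le> r" unfolding r_def using ge0 t0p by simp
    define y where "y = 5/4 * r"
    define v where "v = t0 / (2 * y)"
    have vpos: "v > 0" unfolding v_def y_def using rp t0p by simp
    have t0v: "t0 = 2 * y * v" unfolding v_def y_def using rp by simp
    have yexp: "y * exp (- v) = rho0" using P2t0 unfolding P2_def r_def[symmetric] y_def v_def
      by (simp add: mult.assoc)
    have y_eq: "y = rho0 * exp v" using yexp by (simp add: exp_minus field_simps)
    have vev: "v * exp v > 1"
    proof -
      have "rho0 * (rho0\<^sup>2 + 1) / 5 \<le> 2 * rho0 * (v * exp v)" using t0S unfolding S_def t0v y_eq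
        by (simp add: mult_ac)
      then have "rho0 * ((rho0\<^sup>2 + 1) / 10) \<le> rho0 * (v * exp v)" by (simp add: field_simps)
      then have "(rho0\<^sup>2 + 1) / 10 \<le> v * exp v" using r0 mult_le_cancel_left_pos[of rho0] by simp
      then show ?thesis using r0 by simp
    qed
    have vhalf: "v \<ge> 1/2"
    proof (rule ccontr)
      assume "\<not> v \<ge> 1/2"
      then have "v * exp v < 1/2 * exp (1/2)" using vpos by (intro xexp_strict_mono) auto
      moreover have "exp (1/2::real) \<le> 2"
      proof -
        have "exp (1/2::real) ^ 2 = exp 1" by (simp add: exp_of_nat_mult[symmetric])
        then have "exp (1/2::real) ^ 2 \<le> 2 ^ 2" using exp_le by simp
        then show ?thesis by (rule power2_le_imp_le) simp
      qed
      ultimately show False using vev by simp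
    qed
    have taylor: "1 + 2 * v + 2 * v\<^sup>2 \<le> exp v ^ 2"
    proof -
      have "exp v ^ 2 = exp (2 * v)" by (simp add: power2_eq_square exp_add[symmetric])
      then show ?thesis using exp_lower_Taylor_quadratic[of "2 * v"] vpos by (simp add: power2_eq_square)
    qed
    have rsq: "r\<^sup>2 = 16/25 * (rho0\<^sup>2 * exp v ^ 2)"
    proof -
      have e: "r = 4/5 * (rho0 * exp v)" using y_eq unfolding y_def by simp
      show ?thesis unfolding e power_mult_distrib by (simp add: power2_eq_square)
    qed
    have "9 * (1 + 2 * v + 2 * v\<^sup>2) \<le> rho0\<^sup>2 * exp v ^ 2"
      using r0 taylor vpos by (intro mult_mono) auto
    moreover have "v\<^sup>2 \<ge> v / 2" using vhalf vpos by (simp add: power2_eq_square mult_left_mono)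
    ultimately have big: "r\<^sup>2 + 1 > 10 * (1 + v)" unfolding rsq using vhalf by (rule lin_aux)
    have qbig: "1 - 2 / (r\<^sup>2 + 1) > 1 - 1 / (5 * (1 + v))"
    proof -
      have "2 / (r\<^sup>2 + 1) < 2 / (10 * (1 + v))" using big vpos by (intro divide_strict_left_mono) auto
      moreover have "2 / (10 * (1 + v)) = 1 / (5 * (1 + v))" using vpos by (simp add: field_simps)
      ultimately show ?thesis by simp
    qed
    have brack: "(2*(5/4)*r + t0) * (1 - 2 / (r\<^sup>2 + 1)) > 2 * r + t0"
    proof -
      have e: "2*(5/4)*r + t0 = 5/2 * r * (1 + v)" unfolding t0v y_def by (simp add: algebra_simps)
      have "5/2 * r * (1 + v) * (1 - 2 / (r\<^sup>2 + 1)) > 5/2 * r * (1 + v) * (1 - 1 / (5 * (1 + v)))"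
        using qbig rp vpos by (intro mult_strict_left_mono) auto
      also have "5/2 * r * (1 + v) * (1 - 1 / (5 * (1 + v))) = 2 * r + t0"
        unfolding t0v y_def using vpos by (simp add: field_simps)
      finally show ?thesis unfolding e .
    qed
    have P2'pos: "P2' t0 > 0"
    proof -
      have d: "2 * r + t0 > 0" using rp t0p by simp
      have "(2*(5/4)*r + t0) / (2 * r + t0) * (1 - 2 / (r\<^sup>2 + 1)) > 1"
        using brack d by (simp add: field_simps)
      then show ?thesis unfolding P2'_def r_def[symmetric] by simp
    qed
    have "(P2 has_real_derivative P2' t0) (at t0)" using at_from_within[OF dP2 t0p] t0p by simp
    from DERIV_pos_inc_left[OF this P2'pos] obtain d where d: "d > 0" "\<And>h. h > 0 \<Longrightarrow> h < d \<Longrightarrow> P2 (t0 - h) < P2 t0"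
      by blast
    define h where "h = min d t0 / 2"
    have h: "h > 0" "h < d" "h < t0" unfolding h_def using d t0p by auto
    have "P2 (t0 - h) < rho0" using d(2)[OF h(1,2)] P2t0 by simp
    moreover have "P2 (t0 - h) > rho0" using above[of "t0 - h"] h by simp
    ultimately show False by simp
  qed
  show ?thesis using upper lower ge0[of b] bpos unfolding u_def w_def by auto
qed

end
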